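(* Let $n,m\in\mathbb{N}$ be fixed. For all $X,Y\in \mathrm{IS}^{\mathrm{br}}_{n,m}$: $X \approx_{\mathrm{sa}} Y$ only if there exists an $l\in\mathbb{N}$ such that for all $b'_1,\ldots,b'_l\in\{0,1\}$ there exist $b''_1,\ldots,b''_l\in\{0,1\}$ such that for all $b_1,\ldots,b_n\in\{0,1\}$, writing $I=\{\mathrm{in}_i.\mathrm{BR}_{b_i}\mid 1\le i\le n\}$, $A'=\{\mathrm{aux}_i.\mathrm{BR}_{b'_i}\mid 1\le i\le l\}$, $A''=\{\mathrm{aux}_i.\mathrm{BR}_{b''_i}\mid 1\le i\le l\}$ and $O=\{\mathrm{out}_i.\mathrm{BR}_{0}\mid 1\le i\le m\}$: $$\mathrm{apply}(\mathrm{use}(|X|, I\cup A'),\,O)=\mathrm{apply}(\mathrm{use}(|Y|, I\cup A''),\,O)$$ and $$\mathrm{depth}\big(\mathrm{tuse}(\mathrm{tuse}(|X|, I\cup A'),\,O)\big)=\mathrm{depth}\big(\mathrm{tuse}(\mathrm{tuse}(|Y|, I\cup A''),\,O)\big).$$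
   Context: Foci (register names) are $\mathrm{in}_i,\mathrm{aux}_i,\mathrm{out}_i$ for $i\ge1$; methods are $\mathrm{set}{:}0,\mathrm{set}{:}1,\mathrm{get}$. The basic instructions are $\mathrm{BI}_{n,m}=\{f.\mathrm{get}\mid f\in\{\mathrm{in}_1..\mathrm{in}_n\}\cup\{\mathrm{aux}_i\mid i\ge1\}\}\cup\{f.\mathrm{set}{:}b\mid f\in\{\mathrm{aux}_i\mid i\ge1\}\cup\{\mathrm{out}_1..\mathrm{out}_m\},b\in\{0,1\}\}$; $\mathrm{focus}(f.m)=f$. Primitive instructions: for $a\in\mathrm{BI}_{n,m}$ the plain instruction $a$, positive test $+a$, negative test $-a$; forward jumps $\#l$ ($l\in\mathbb{N}$); termination $!$. $\mathrm{IS}^{\mathrm{br}}_{n,m}$ is the set of finite nonempty sequences of primitive instructions, written $u_1;\dots;u_k$. Threads: finite terms built from $\mathsf{S}$ (termination), $\mathsf{D}$ (inaction) and postconditional composition $x\trianglelefteq a\trianglerighteq y$ for basic actions $a$, where basic actions are the $f.m$ and also the trace actions $\langle f.m\rangle r$ ($r\in\{0,1\}$); threads are equal iff syntactically equal; $a\circ x$ abbreviates $x\trianglelefteq a\trianglerighteq x$. $\mathrm{depth}(\mathsf S)=\mathrm{depth}(\mathsf D)=0$, $\mathrm{depth}(x\trianglelefteq a\trianglerighteq y)=\max(\mathrm{depth}(x),\mathrm{depth}(y))+1$. Thread extraction $|\cdot|$ ($u$ primitive, $X$ a nonempty sequence): $|a|=a\circ\mathsf D$, $|a;X|=a\circ|X|$,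 $|{+a}|=|{-a}|=a\circ\mathsf D$, $|{+a};X|=|X|\trianglelefteq a\trianglerighteq|\#2;X|$, $|{-a};X|=|\#2;X|\trianglelefteq a\trianglerighteq|X|$, $|\#l|=\mathsf D$, $|\#0;X|=\mathsf D$, $|\#1;X|=|X|$, $|\#(l+2);u|=\mathsf D$, $|\#(l+2);u;X|=|\#(l+1);X|$, $|!|=|!;X|=\mathsf S$. (Execution: tests run $a$ and skip the next instruction if the reply is $0$ for $+a$, $1$ for $-a$.) A register family $F$ is a finite set of pairs $f.\mathrm{BR}_b$ ($b\in\{0,1\}$, Boolean register named $f$ with content $b$) with pairwise distinct foci; $\emptyset$ is the empty family. Processing method $m$ on $\mathrm{BR}_b$: $\mathrm{set}{:}c$ gives reply $c$ and new content $c$; $\mathrm{get}$ gives reply $b$ and leaves content $b$. If $f.\mathrm{BR}_b\in F$ and $m$ yields reply $r$ and new content $b'$, let $F'$ be $F$ with $f.\mathrm{BR}_b$ replaced by $f.\mathrm{BR}_{b'}$. Abstracting use: $\mathrm{use}(\mathsf S,F)=\mathsf S$, $\mathrm{use}(\mathsf D,F)=\mathsf D$; if $f$ is not a focus in $F$, $\mathrm{use}(x\trianglelefteq f.m\trianglerighteq y,F)=\mathrm{use}(x,F)\trianglelefteq f.m\trianglerighteq\mathrm{use}(y,F)$; otherwise it equals $\mathrm{use}(x,F')$ if $r=1$ and $\mathrm{use}(y,F')$ if $r=0$; $\mathrm{use}(x\trianglelefteq\langle f.m\rangle r\trianglerighteq y,F)=\langle f.m\rangle r\circ\mathrm{use}(x,F)$.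 Apply (result is a register family): $\mathrm{apply}(\mathsf S,F)=F$, $\mathrm{apply}(\mathsf D,F)=\emptyset$; if $f$ not a focus in $F$, $\mathrm{apply}(x\trianglelefteq f.m\trianglerighteq y,F)=\emptyset$; otherwise it equals $\mathrm{apply}(x,F')$ if $r=1$, $\mathrm{apply}(y,F')$ if $r=0$; $\mathrm{apply}(x\trianglelefteq\langle f.m\rangle r\trianglerighteq y,F)=\mathrm{apply}(x,F)$. Tracking use: $\mathrm{tuse}(\mathsf S,F)=\mathsf S$, $\mathrm{tuse}(\mathsf D,F)=\mathsf D$; if $f$ not a focus in $F$, $\mathrm{tuse}(x\trianglelefteq f.m\trianglerighteq y,F)=\mathrm{tuse}(x,F)\trianglelefteq f.m\trianglerighteq\mathrm{tuse}(y,F)$; otherwise it equals $\langle f.m\rangle 1\circ\mathrm{tuse}(x,F')$ if $r=1$ and $\langle f.m\rangle 0\circ\mathrm{tuse}(y,F')$ if $r=0$; $\mathrm{tuse}(x\trianglelefteq\langle f.m\rangle r\trianglerighteq y,F)=\langle f.m\rangle r\circ\mathrm{tuse}(x,F)$. Equivalences on $\mathrm{IS}^{\mathrm{br}}_{n,m}$: (i) $X\approx_{\mathrm b}Y$ iff $|X|=|Y|$. (ii) $X\approx_{\mathrm x}Y$ iff $Y=\chi_I(X)$ for some finite $I\subset\mathbb{N}_{>0}$, where $\chi_I$ acts instruction-wise: for $f=\mathrm{aux}_i$ with $i\in I$, $f.m\mapsto f.\chi''(m)$, $+f.m\mapsto -f.\chi''(m)$, $-f.m\mapsto +f.\chi''(m)$,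 with $\chi''$ swapping $\mathrm{set}{:}0$ and $\mathrm{set}{:}1$ and fixing $\mathrm{get}$; all other instructions unchanged. (iii) $X\approx_{\mathrm r}Y$ iff $Y=\rho_r(X)$ for some bijection $r$ of $\mathbb{N}_{>0}$, where $\rho_r$ replaces instruction-wise every focus $\mathrm{aux}_i$ by $\mathrm{aux}_{r(i)}$ (in plain, positive and negative test instructions) and leaves everything else unchanged. (iv) $X\approx_{\mathrm t}Y$ iff $|X|\approx'_{\mathrm t}|Y|$, where $\approx'_{\mathrm t}$ is the smallest relation on finite threads over $\mathrm{BI}_{n,m}$ such that: if $\mathrm{focus}(a)\ne\mathrm{focus}(b)$ then $(x\trianglelefteq b\trianglerighteq y)\trianglelefteq a\trianglerighteq(x'\trianglelefteq b\trianglerighteq y')\approx'_{\mathrm t}(x\trianglelefteq a\trianglerighteq x')\trianglelefteq b\trianglerighteq(y\trianglelefteq a\trianglerighteq y')$; it is reflexive and transitive; and $x\approx'_{\mathrm t}x'$, $y\approx'_{\mathrm t}y'$ imply $x\trianglelefteq a\trianglerighteq y\approx'_{\mathrm t}x'\trianglelefteq a\trianglerighteq y'$. The structural algorithmic equivalence $\approx_{\mathrm{sa}}$ is the smallest relation containing $\approx_{\mathrm b},\approx_{\mathrm x},\approx_{\mathrm r},\approx_{\mathrm t}$ and closed under transitivity. *)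

theory Defs
  imports Main
begin

datatype focus = In nat | Aux nat | Out nat
datatype meth = Set0 | Set1 | Get
datatype binstr = BI focus meth

fun focus_of :: "binstr \<Rightarrow> focus" where
  "focus_of (BI f m) = f"

definition BI_set :: "nat \<Rightarrow> nat \<Rightarrow> binstr set" where
  "BI_set n m =
     {BI f Get | f. (\<exists>i. 1 \<le> i \<and> i \<le> n \<and> f = In i) \<or> (\<exists>i. 1 \<le> i \<and> f = Aux i)}
   \<union> {BI f s | f s. s \<in> {Set0, Set1} \<and>
        ((\<exists>i. 1 \<le> i \<and> f = Aux i) \<or> (\<exists>i. 1 \<le> i \<and> i \<le> m \<and> f = Out i))}"

datatype instr = Plain binstr | PosT binstr | NegT binstr | Jump nat | Term

fun instr_ok :: "nat \<Rightarrow> nat \<Rightarrow> instr \<Rightarrow> bool" where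
  "instr_ok n m (Plain a) = (a \<in> BI_set n m)"
| "instr_ok n m (PosT a) = (a \<in> BI_set n m)"
| "instr_ok n m (NegT a) = (a \<in> BI_set n m)"
| "instr_ok n m (Jump l) = True"
| "instr_ok n m Term = True"

definition IS :: "nat \<Rightarrow> nat \<Rightarrow> instr list set" where
  "IS n m = {X. X \<noteq> [] \<and> (\<forall>u \<in> set X. instr_ok n m u)}"

datatype action = Basic binstr | Trace binstr bool

datatype thread = S | D | PC thread action thread

definition act :: "action \<Rightarrow> thread \<Rightarrow> thread" where
  "act a x = PC x a x"

fun depth :: "thread \<Rightarrow> nat" where
  "depth S = 0"
| "depth D = 0"
| "depth (PC x a y) = max (depth x) (depth y) + 1"

fun jweight :: "instr list \<Rightarrow> nat" where
  "jweight [] = 0"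
| "jweight (Jump l # X) = 2 * length X + 1"
| "jweight (u # X) = 2 * length X + 2"

lemma jweight_le: "jweight (u # X) \<le> 2 * length X + 2"
  by (cases u) auto

function extr :: "instr list \<Rightarrow> thread" where
  "extr [] = D"
| "extr [Plain a] = act (Basic a) D"
| "extr (Plain a # u # X) = act (Basic a) (extr (u # X))"
| "extr [PosT a] = act (Basic a) D"
| "extr (PosT a # u # X) = PC (extr (u # X)) (Basic a) (extr (Jump 2 # u # X))"
| "extr [NegT a] = act (Basic a) D"
| "extr (NegT a # u # X) = PC (extr (Jump 2 # u # X)) (Basic a) (extr (u # X))"
| "extr [Jump l] = D"
| "extr (Jump 0 # u # X) = D"
| "extr (Jump (Suc 0) # u # X) = extr (u # X)"
| "extr [Jump (Suc (Suc l)), u] = D"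
| "extr (Jump (Suc (Suc l)) # u # v # X) = extr (Jump (Suc l) # v # X)"
| "extr (Term # X) = S"
  by pat_completeness auto
termination
  by (relation "measure jweight") (auto intro: le_less_trans[OF jweight_le])

text \<open>A register family is represented as a finite partial map from foci to
  register contents (pairwise distinct foci are automatic).\<close>
type_synonym regfam = "focus \<Rightarrow> bool option"

fun proc :: "meth \<Rightarrow> bool \<Rightarrow> bool \<times> bool" where
  "proc Set0 b = (False, False)"
| "proc Set1 b = (True, True)"
| "proc Get b = (b, b)"

fun use_rf :: "thread \<Rightarrow> regfam \<Rightarrow> thread" where
  "use_rf S F = S"
| "use_rf D F = D"
| "use_rf (PC x (Basic (BI f m)) y) F =
     (case F f of
        None \<Rightarrow> PC (use_rf x F) (Basic (BI f m)) (use_rf y F)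
      | Some b \<Rightarrow> (let (r, b') = proc m b in
                   if r then use_rf x (F(f \<mapsto> b')) else use_rf y (F(f \<mapsto> b'))))"
| "use_rf (PC x (Trace a r) y) F = act (Trace a r) (use_rf x F)"

fun apply_rf :: "thread \<Rightarrow> regfam \<Rightarrow> regfam" where
  "apply_rf S F = F"
| "apply_rf D F = Map.empty"
| "apply_rf (PC x (Basic (BI f m)) y) F =
     (case F f of
        None \<Rightarrow> Map.empty
      | Some b \<Rightarrow> (let (r, b') = proc m b in
                   if r then apply_rf x (F(f \<mapsto> b')) else apply_rf y (F(f \<mapsto> b'))))"
| "apply_rf (PC x (Trace a r) y) F = apply_rf x F"

fun tuse_rf :: "thread \<Rightarrow> regfam \<Rightarrow> thread" where
  "tuse_rf S F = S"
| "tuse_rf D F = D"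
| "tuse_rf (PC x (Basic (BI f m)) y) F =
     (case F f of
        None \<Rightarrow> PC (tuse_rf x F) (Basic (BI f m)) (tuse_rf y F)
      | Some b \<Rightarrow> (let (r, b') = proc m b in
                   if r then act (Trace (BI f m) True) (tuse_rf x (F(f \<mapsto> b')))
                   else act (Trace (BI f m) False) (tuse_rf y (F(f \<mapsto> b')))))"
| "tuse_rf (PC x (Trace a r) y) F = act (Trace a r) (tuse_rf x F)"

definition beq :: "nat \<Rightarrow> nat \<Rightarrow> instr list \<Rightarrow> instr list \<Rightarrow> bool" where
  "beq n m X Y \<longleftrightarrow> X \<in> IS n m \<and> Y \<in> IS n m \<and> extr X = extr Y"

fun chi_m :: "meth \<Rightarrow> meth" where
  "chi_m Set0 = Set1"
| "chi_m Set1 = Set0"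
| "chi_m Get = Get"

fun chi :: "nat set \<Rightarrow> instr \<Rightarrow> instr" where
  "chi I (Plain (BI (Aux i) mt)) = (if i \<in> I then Plain (BI (Aux i) (chi_m mt)) else Plain (BI (Aux i) mt))"
| "chi I (PosT (BI (Aux i) mt)) = (if i \<in> I then NegT (BI (Aux i) (chi_m mt)) else PosT (BI (Aux i) mt))"
| "chi I (NegT (BI (Aux i) mt)) = (if i \<in> I then PosT (BI (Aux i) (chi_m mt)) else NegT (BI (Aux i) mt))"
| "chi I u = u"

definition xeq :: "nat \<Rightarrow> nat \<Rightarrow> instr list \<Rightarrow> instr list \<Rightarrow> bool" where
  "xeq n m X Y \<longleftrightarrow> X \<in> IS n m \<and> Y \<in> IS n m \<and>
     (\<exists>I. finite I \<and> I \<subseteq> {0<..} \<and> Y = map (chi I) X)"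

fun rho_f :: "(nat \<Rightarrow> nat) \<Rightarrow> focus \<Rightarrow> focus" where
  "rho_f r (Aux i) = Aux (r i)"
| "rho_f r f = f"

fun rho :: "(nat \<Rightarrow> nat) \<Rightarrow> instr \<Rightarrow> instr" where
  "rho r (Plain (BI f mt)) = Plain (BI (rho_f r f) mt)"
| "rho r (PosT (BI f mt)) = PosT (BI (rho_f r f) mt)"
| "rho r (NegT (BI f mt)) = NegT (BI (rho_f r f) mt)"
| "rho r u = u"

definition req :: "nat \<Rightarrow> nat \<Rightarrow> instr list \<Rightarrow> instr list \<Rightarrow> bool" where
  "req n m X Y \<longleftrightarrow> X \<in> IS n m \<and> Y \<in> IS n m \<and>
     (\<exists>r. bij_betw r {0<..} {0<..} \<and> Y = map (rho r) X)"

fun thread_over :: "nat \<Rightarrow> nat \<Rightarrow> thread \<Rightarrow> bool" where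
  "thread_over n m S = True"
| "thread_over n m D = True"
| "thread_over n m (PC x (Basic a) y) = (a \<in> BI_set n m \<and> thread_over n m x \<and> thread_over n m y)"
| "thread_over n m (PC x (Trace a r) y) = False"

inductive teq' :: "nat \<Rightarrow> nat \<Rightarrow> thread \<Rightarrow> thread \<Rightarrow> bool" for n m where
  swap: "\<lbrakk> a \<in> BI_set n m; b \<in> BI_set n m; focus_of a \<noteq> focus_of b;
           thread_over n m x; thread_over n m y; thread_over n m x'; thread_over n m y' \<rbrakk> \<Longrightarrow>
         teq' n m (PC (PC x (Basic b) y) (Basic a) (PC x' (Basic b) y'))
                  (PC (PC x (Basic a) x') (Basic b) (PC y (Basic a) y'))"
| refl: "thread_over n m x \<Longrightarrow> teq' n m x x"
| trans: "\<lbrakk> teq' n m x y; teq' n m y z \<rbrakk> \<Longrightarrow> teq' n m x z"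
| cong: "\<lbrakk> a \<in> BI_set n m; teq' n m x x'; teq' n m y y' \<rbrakk> \<Longrightarrow>
         teq' n m (PC x (Basic a) y) (PC x' (Basic a) y')"

definition teq :: "nat \<Rightarrow> nat \<Rightarrow> instr list \<Rightarrow> instr list \<Rightarrow> bool" where
  "teq n m X Y \<longleftrightarrow> X \<in> IS n m \<and> Y \<in> IS n m \<and> teq' n m (extr X) (extr Y)"

definition saeq :: "nat \<Rightarrow> nat \<Rightarrow> instr list \<Rightarrow> instr list \<Rightarrow> bool" where
  "saeq n m = tranclp (\<lambda>X Y. beq n m X Y \<or> xeq n m X Y \<or> req n m X Y \<or> teq n m X Y)"

definition in_regs :: "nat \<Rightarrow> (nat \<Rightarrow> bool) \<Rightarrow> regfam" where
  "in_regs n b = (\<lambda>f. case f of In i \<Rightarrow> (if 1 \<le> i \<and> i \<le> n then Some (b i) else None) | _ \<Rightarrow> None)"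

definition aux_regs :: "nat \<Rightarrow> (nat \<Rightarrow> bool) \<Rightarrow> regfam" where
  "aux_regs l b = (\<lambda>f. case f of Aux i \<Rightarrow> (if 1 \<le> i \<and> i \<le> l then Some (b i) else None) | _ \<Rightarrow> None)"

definition out_regs :: "nat \<Rightarrow> regfam" where
  "out_regs m = (\<lambda>f. case f of Out i \<Rightarrow> (if 1 \<le> i \<and> i \<le> m then Some False else None) | _ \<Rightarrow> None)"

end

theory Submission
  imports Defs
begin

fun pr :: "meth \<Rightarrow> bool \<Rightarrow> bool" where
  "pr Set0 b = False" | "pr Set1 b = True" | "pr Get b = b"

lemma proc_pr: "proc mt b = (pr mt b, pr mt b)" by (cases mt) auto

lemma use_B[simp]: "use_rf (PC x (Basic (BI f mt)) y) F = (case F f of None \<Rightarrow> PC (use_rf x F) (Basic (BI f mt)) (use_rf y F)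
   | Some b \<Rightarrow> if pr mt b then use_rf x (F(f \<mapsto> True)) else use_rf y (F(f \<mapsto> False)))"
  by (simp add: proc_pr split: option.split)
lemma apply_B[simp]: "apply_rf (PC x (Basic (BI f mt)) y) F = (case F f of None \<Rightarrow> Map.empty
   | Some b \<Rightarrow> if pr mt b then apply_rf x (F(f \<mapsto> True)) else apply_rf y (F(f \<mapsto> False)))"
  by (simp add: proc_pr split: option.split)
lemma tuse_B[simp]: "tuse_rf (PC x (Basic (BI f mt)) y) F = (case F f of None \<Rightarrow> PC (tuse_rf x F) (Basic (BI f mt)) (tuse_rf y F)
   | Some b \<Rightarrow> if pr mt b then act (Trace (BI f mt) True) (tuse_rf x (F(f \<mapsto> True)))
       else act (Trace (BI f mt) False) (tuse_rf y (F(f \<mapsto> False))))"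
  by (simp add: proc_pr split: option.split)

declare use_rf.simps(3)[simp del] apply_rf.simps(3)[simp del] tuse_rf.simps(3)[simp del]

definition simeq :: "thread \<Rightarrow> thread \<Rightarrow> bool" where
  "simeq x y \<longleftrightarrow> (\<forall>F G. apply_rf (use_rf x F) G = apply_rf (use_rf y F) G \<and>
       depth (tuse_rf (tuse_rf x F) G) = depth (tuse_rf (tuse_rf y F) G))"

lemma simeq_swap:
  assumes "fa \<noteq> fb"
  shows "simeq (PC (PC x (Basic (BI fb mb)) y) (Basic (BI fa ma)) (PC x' (Basic (BI fb mb)) y'))
                  (PC (PC x (Basic (BI fa ma)) x') (Basic (BI fb mb)) (PC y (Basic (BI fa ma)) y'))"
  unfolding simeq_def
proof (intro allI)
  fix F G :: regfam
  show "apply_rf (use_rf (PC (PC x (Basic (BI fb mb)) y) (Basic (BI fa ma)) (PC x' (Basic (BI fb mb)) y')) F) G =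
    apply_rf (use_rf (PC (PC x (Basic (BI fa ma)) x') (Basic (BI fb mb)) (PC y (Basic (BI fa ma)) y')) F) G \<and>
    depth (tuse_rf (tuse_rf (PC (PC x (Basic (BI fb mb)) y) (Basic (BI fa ma)) (PC x' (Basic (BI fb mb)) y')) F) G) =
    depth (tuse_rf (tuse_rf (PC (PC x (Basic (BI fa ma)) x') (Basic (BI fb mb)) (PC y (Basic (BI fa ma)) y')) F) G)"
    using assms
    by (cases "F fa"; cases "F fb"; cases "G fa"; cases "G fb")
       (auto simp: act_def fun_upd_twist[OF assms])
qed

lemma simeq_cong:
  assumes "simeq x x'" "simeq y y'"
  shows "simeq (PC x (Basic (BI f mt)) y) (PC x' (Basic (BI f mt)) y')"
  unfolding simeq_def
proof (intro allI)
  fix F G :: regfam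
  show "apply_rf (use_rf (PC x (Basic (BI f mt)) y) F) G = apply_rf (use_rf (PC x' (Basic (BI f mt)) y') F) G \<and>
       depth (tuse_rf (tuse_rf (PC x (Basic (BI f mt)) y) F) G) = depth (tuse_rf (tuse_rf (PC x' (Basic (BI f mt)) y') F) G)"
    using assms unfolding simeq_def
    by (cases "F f"; cases "G f") (auto simp: act_def)
qed

lemma teq_simeq: "teq' n m x y \<Longrightarrow> simeq x y"
proof (induction rule: teq'.induct)
  case (swap a b x y x' y')
  then show ?case by (cases a; cases b) (auto intro: simeq_swap)
next
  case (refl x) then show ?case by (simp add: simeq_def)
next
  case (trans x y z) then show ?case by (simp add: simeq_def)
next
  case (cong a x x' y y') then show ?case by (cases a) (auto intro: simeq_cong)
qed


fun swB :: "nat set \<Rightarrow> binstr \<Rightarrow> bool" where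
  "swB I (BI (Aux i) mt) = (i \<in> I)" | "swB I (BI (In i) mt) = False" | "swB I (BI (Out i) mt) = False"
fun chiB :: "nat set \<Rightarrow> binstr \<Rightarrow> binstr" where
  "chiB I (BI (Aux i) mt) = BI (Aux i) (if i \<in> I then chi_m mt else mt)"
| "chiB I (BI (In i) mt) = BI (In i) mt" | "chiB I (BI (Out i) mt) = BI (Out i) mt"
fun swA :: "nat set \<Rightarrow> action \<Rightarrow> bool" where
  "swA I (Basic c) = swB I c" | "swA I (Trace c r) = False"
fun chiA :: "nat set \<Rightarrow> action \<Rightarrow> action" where
  "chiA I (Basic c) = Basic (chiB I c)"
| "chiA I (Trace c r) = Trace (chiB I c) (if swB I c then \<not> r else r)"
fun chiT :: "nat set \<Rightarrow> thread \<Rightarrow> thread" where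
  "chiT I S = S" | "chiT I D = D"
| "chiT I (PC x a y) = (if swA I a then PC (chiT I y) (chiA I a) (chiT I x) else PC (chiT I x) (chiA I a) (chiT I y))"

lemma chi_Plain[simp]: "chi I (Plain a) = Plain (chiB I a)"
  by (cases a) (rename_tac f mt, case_tac f, auto)
lemma chi_PosT[simp]: "chi I (PosT a) = (if swB I a then NegT (chiB I a) else PosT (chiB I a))"
  by (cases a) (rename_tac f mt, case_tac f, auto)
lemma chi_NegT[simp]: "chi I (NegT a) = (if swB I a then PosT (chiB I a) else NegT (chiB I a))"
  by (cases a) (rename_tac f mt, case_tac f, auto)

lemma extr_chi: "extr (map (chi I) X) = chiT I (extr X)"
  by (induction X rule: extr.induct) (auto simp: act_def)

definition flipF :: "nat set \<Rightarrow> regfam \<Rightarrow> regfam" where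
  "flipF I F = (\<lambda>f. case f of Aux i \<Rightarrow> if i \<in> I then map_option Not (F f) else F f | _ \<Rightarrow> F f)"

lemma pr_chi: "pr (chi_m mt) (\<not> b) = (\<not> pr mt b)" by (cases mt) auto

lemma flip_upd_aux: "(flipF I F)(Aux i \<mapsto> v) = flipF I (F(Aux i \<mapsto> (if i \<in> I then \<not> v else v)))"
  by (rule ext) (auto simp: flipF_def split: focus.split)
lemma flip_upd_in: "(flipF I F)(In i \<mapsto> v) = flipF I (F(In i \<mapsto> v))"
  by (rule ext) (auto simp: flipF_def split: focus.split)
lemma flip_upd_out: "(flipF I F)(Out i \<mapsto> v) = flipF I (F(Out i \<mapsto> v))"
  by (rule ext) (auto simp: flipF_def split: focus.split)
lemmas flip_upd = flip_upd_aux flip_upd_in flip_upd_out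

lemma flip_aux: "flipF I F (Aux i) = (if i \<in> I then map_option Not (F (Aux i)) else F (Aux i))"
  and flip_in: "flipF I F (In i) = F (In i)" and flip_out: "flipF I F (Out i) = F (Out i)"
  by (auto simp: flipF_def)

lemma use_chi: "use_rf (chiT I t) (flipF I F) = chiT I (use_rf t F)"
proof (induction t arbitrary: F)
  case (PC x a y)
  show ?case
  proof (cases a)
    case (Basic c)
    then obtain f mt where c: "c = BI f mt" by (cases c) auto
    show ?thesis using PC unfolding Basic c
      by (cases f; cases "F f") (auto simp: act_def flip_upd flip_aux flip_in flip_out pr_chi)
  next
    case (Trace c r) then show ?thesis using PC
      by (cases c) (rename_tac f mt, case_tac f, auto simp: act_def)
  qed
qed auto

lemma tuse_chi: "tuse_rf (chiT I t) (flipF I F) = chiT I (tuse_rf t F)"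
proof (induction t arbitrary: F)
  case (PC x a y)
  show ?case
  proof (cases a)
    case (Basic c)
    then obtain f mt where c: "c = BI f mt" by (cases c) auto
    show ?thesis using PC unfolding Basic c
      by (cases f; cases "F f") (auto simp: act_def flip_upd flip_aux flip_in flip_out pr_chi)
  next
    case (Trace c r) then show ?thesis using PC
      by (cases c) (rename_tac f mt, case_tac f, auto simp: act_def)
  qed
qed auto

lemma apply_chi: "\<forall>i. G (Aux i) = None \<Longrightarrow> apply_rf (chiT I t) G = apply_rf t G"
proof (induction t arbitrary: G)
  case (PC x a y)
  show ?case
  proof (cases a)
    case (Basic c)
    then obtain f mt where c: "c = BI f mt" by (cases c) auto
    show ?thesis using PC unfolding Basic c
      by (cases f; cases "G f") auto
  next
    case (Trace c r) then show ?thesis using PC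
      by (cases c) (rename_tac f mt, case_tac f, auto)
  qed
qed auto

lemma flip_noaux: "\<forall>i. G (Aux i) = None \<Longrightarrow> flipF I G = G"
  by (rule ext) (auto simp: flipF_def split: focus.split)

lemma depth_chi: "depth (chiT I t) = depth t"
  by (induction t) auto


fun rhoA :: "(nat \<Rightarrow> nat) \<Rightarrow> action \<Rightarrow> action" where
  "rhoA r (Basic (BI f mt)) = Basic (BI (rho_f r f) mt)"
| "rhoA r (Trace (BI f mt) b) = Trace (BI (rho_f r f) mt) b"
fun rhoT :: "(nat \<Rightarrow> nat) \<Rightarrow> thread \<Rightarrow> thread" where
  "rhoT r S = S" | "rhoT r D = D" | "rhoT r (PC x a y) = PC (rhoT r x) (rhoA r a) (rhoT r y)"

fun rhoB :: "(nat \<Rightarrow> nat) \<Rightarrow> binstr \<Rightarrow> binstr" where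
  "rhoB r (BI f mt) = BI (rho_f r f) mt"
lemma rho_Plain[simp]: "rho r (Plain a) = Plain (rhoB r a)" by (cases a) simp
lemma rho_PosT[simp]: "rho r (PosT a) = PosT (rhoB r a)" by (cases a) simp
lemma rho_NegT[simp]: "rho r (NegT a) = NegT (rhoB r a)" by (cases a) simp
lemma rhoA_B[simp]: "rhoA r (Basic a) = Basic (rhoB r a)" by (cases a) simp

lemma extr_rho: "extr (map (rho r) X) = rhoT r (extr X)"
proof (induction X rule: extr.induct)
qed (auto simp: act_def)

fun auxA :: "action \<Rightarrow> nat set" where
  "auxA (Basic (BI (Aux i) mt)) = {i}" | "auxA (Basic (BI (In i) mt)) = {}" | "auxA (Basic (BI (Out i) mt)) = {}"
| "auxA (Trace (BI (Aux i) mt) r) = {i}" | "auxA (Trace (BI (In i) mt) r) = {}" | "auxA (Trace (BI (Out i) mt) r) = {}"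
fun auxT :: "thread \<Rightarrow> nat set" where
  "auxT S = {}" | "auxT D = {}" | "auxT (PC x a y) = auxA a \<union> auxT x \<union> auxT y"

lemma finite_auxA: "finite (auxA a)"
  by (cases a) (rename_tac c, case_tac c, rename_tac f mt, case_tac f, auto,
      rename_tac c r, case_tac c, rename_tac f mt, case_tac f, auto)
lemma finite_auxT: "finite (auxT t)" by (induction t) (auto simp: finite_auxA)

lemma use_rho:
  assumes "\<forall>f. (\<forall>i. f \<noteq> Aux i) \<longrightarrow> G f = F f" "\<forall>i\<in>A. G (Aux (r i)) = F (Aux i)"
    "inj_on r A" "auxT t \<subseteq> A"
  shows "use_rf (rhoT r t) G = rhoT r (use_rf t F)"
  using assms(1,2,4)
proof (induction t arbitrary: F G)
  case (PC x a y)
  show ?case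
  proof (cases a)
    case (Basic c)
    then obtain f mt where c: "c = BI f mt" by (cases c) auto
    show ?thesis
    proof (cases f)
      case (Aux i)
      have iA: "i \<in> A" using PC.prems(3) by (simp add: Basic c Aux)
      have e: "G (Aux (r i)) = F (Aux i)" using PC.prems(2) iA by blast
      have upd: "\<forall>j\<in>A. (G(Aux (r i) \<mapsto> v)) (Aux (r j)) = (F(Aux i \<mapsto> v)) (Aux j)" for v
        using PC.prems(2) iA assms(3) by (auto simp: inj_on_def)
      have upd2: "\<forall>f. (\<forall>i. f \<noteq> Aux i) \<longrightarrow> (G(Aux (r i) \<mapsto> v)) f = (F(Aux i \<mapsto> v)) f" for v
        using PC.prems(1) by auto
      have sx: "auxT x \<subseteq> A" "auxT y \<subseteq> A" using PC.prems(3) by auto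
      show ?thesis using PC.IH(1)[OF _ _ sx(1)] PC.IH(2)[OF _ _ sx(2)] PC.prems(1,2) upd upd2 e
        unfolding Basic c Aux by (cases "F (Aux i)") (auto simp: act_def)
    next
      case (In i)
      have e: "G f = F f" using PC.prems(1) In by auto
      have upd2: "\<forall>f'. (\<forall>i. f' \<noteq> Aux i) \<longrightarrow> (G(f \<mapsto> v)) f' = (F(f \<mapsto> v)) f'" for v
        using PC.prems(1) by auto
      have upd: "\<forall>j\<in>A. (G(f \<mapsto> v)) (Aux (r j)) = (F(f \<mapsto> v)) (Aux j)" for v
        using PC.prems(2) In by auto
      have sx: "auxT x \<subseteq> A" "auxT y \<subseteq> A" using PC.prems(3) by auto
      show ?thesis using PC.IH(1)[OF _ _ sx(1)] PC.IH(2)[OF _ _ sx(2)] PC.prems(1,2) upd upd2 e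
        unfolding Basic c In by (cases "F (In i)") (auto simp: act_def)
    next
      case (Out i)
      have e: "G f = F f" using PC.prems(1) Out by auto
      have upd2: "\<forall>f'. (\<forall>i. f' \<noteq> Aux i) \<longrightarrow> (G(f \<mapsto> v)) f' = (F(f \<mapsto> v)) f'" for v
        using PC.prems(1) by auto
      have upd: "\<forall>j\<in>A. (G(f \<mapsto> v)) (Aux (r j)) = (F(f \<mapsto> v)) (Aux j)" for v
        using PC.prems(2) Out by auto
      have sx: "auxT x \<subseteq> A" "auxT y \<subseteq> A" using PC.prems(3) by auto
      show ?thesis using PC.IH(1)[OF _ _ sx(1)] PC.IH(2)[OF _ _ sx(2)] PC.prems(1,2) upd upd2 e
        unfolding Basic c Out by (cases "F (Out i)") (auto simp: act_def)
    qed
  next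
    case (Trace c b)
    have sx: "auxT x \<subseteq> A" using PC.prems(3) by auto
    then show ?thesis using PC.IH(1)[OF PC.prems(1,2) sx] Trace
      by (cases c) (auto simp: act_def)
  qed
qed auto

lemma tuse_rho:
  assumes "\<forall>f. (\<forall>i. f \<noteq> Aux i) \<longrightarrow> G f = F f" "\<forall>i\<in>A. G (Aux (r i)) = F (Aux i)"
    "inj_on r A" "auxT t \<subseteq> A"
  shows "tuse_rf (rhoT r t) G = rhoT r (tuse_rf t F)"
  using assms(1,2,4)
proof (induction t arbitrary: F G)
  case (PC x a y)
  show ?case
  proof (cases a)
    case (Basic c)
    then obtain f mt where c: "c = BI f mt" by (cases c) auto
    show ?thesis
    proof (cases f)
      case (Aux i)
      have iA: "i \<in> A" using PC.prems(3) by (simp add: Basic c Aux)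
      have e: "G (Aux (r i)) = F (Aux i)" using PC.prems(2) iA by blast
      have upd: "\<forall>j\<in>A. (G(Aux (r i) \<mapsto> v)) (Aux (r j)) = (F(Aux i \<mapsto> v)) (Aux j)" for v
        using PC.prems(2) iA assms(3) by (auto simp: inj_on_def)
      have upd2: "\<forall>f. (\<forall>i. f \<noteq> Aux i) \<longrightarrow> (G(Aux (r i) \<mapsto> v)) f = (F(Aux i \<mapsto> v)) f" for v
        using PC.prems(1) by auto
      have sx: "auxT x \<subseteq> A" "auxT y \<subseteq> A" using PC.prems(3) by auto
      show ?thesis using PC.IH(1)[OF _ _ sx(1)] PC.IH(2)[OF _ _ sx(2)] PC.prems(1,2) upd upd2 e
        unfolding Basic c Aux by (cases "F (Aux i)") (auto simp: act_def)
    next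
      case (In i)
      have e: "G f = F f" using PC.prems(1) In by auto
      have upd2: "\<forall>f'. (\<forall>i. f' \<noteq> Aux i) \<longrightarrow> (G(f \<mapsto> v)) f' = (F(f \<mapsto> v)) f'" for v
        using PC.prems(1) by auto
      have upd: "\<forall>j\<in>A. (G(f \<mapsto> v)) (Aux (r j)) = (F(f \<mapsto> v)) (Aux j)" for v
        using PC.prems(2) In by auto
      have sx: "auxT x \<subseteq> A" "auxT y \<subseteq> A" using PC.prems(3) by auto
      show ?thesis using PC.IH(1)[OF _ _ sx(1)] PC.IH(2)[OF _ _ sx(2)] PC.prems(1,2) upd upd2 e
        unfolding Basic c In by (cases "F (In i)") (auto simp: act_def)
    next
      case (Out i)
      have e: "G f = F f" using PC.prems(1) Out by auto
      have upd2: "\<forall>f'. (\<forall>i. f' \<noteq> Aux i) \<longrightarrow> (G(f \<mapsto> v)) f' = (F(f \<mapsto> v)) f'" for v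
        using PC.prems(1) by auto
      have upd: "\<forall>j\<in>A. (G(f \<mapsto> v)) (Aux (r j)) = (F(f \<mapsto> v)) (Aux j)" for v
        using PC.prems(2) Out by auto
      have sx: "auxT x \<subseteq> A" "auxT y \<subseteq> A" using PC.prems(3) by auto
      show ?thesis using PC.IH(1)[OF _ _ sx(1)] PC.IH(2)[OF _ _ sx(2)] PC.prems(1,2) upd upd2 e
        unfolding Basic c Out by (cases "F (Out i)") (auto simp: act_def)
    qed
  next
    case (Trace c b)
    have sx: "auxT x \<subseteq> A" using PC.prems(3) by auto
    then show ?thesis using PC.IH(1)[OF PC.prems(1,2) sx] Trace
      by (cases c) (auto simp: act_def)
  qed
qed auto

lemma tuse_rho_noaux: "\<forall>i. G (Aux i) = None \<Longrightarrow> tuse_rf (rhoT r t) G = rhoT r (tuse_rf t G)"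
proof (induction t arbitrary: G)
  case (PC x a y)
  show ?case
  proof (cases a)
    case (Basic c)
    then obtain f mt where c: "c = BI f mt" by (cases c) auto
    show ?thesis using PC unfolding Basic c
      by (cases f; cases "G f") (auto simp: act_def)
  next
    case (Trace c b) then show ?thesis using PC
      by (cases c) (auto simp: act_def)
  qed
qed auto

lemma apply_rho: "\<forall>i. G (Aux i) = None \<Longrightarrow> apply_rf (rhoT r t) G = apply_rf t G"
proof (induction t arbitrary: G)
  case (PC x a y)
  show ?case
  proof (cases a)
    case (Basic c)
    then obtain f mt where c: "c = BI f mt" by (cases c) auto
    show ?thesis using PC unfolding Basic c
      by (cases f; cases "G f") auto
  next
    case (Trace c b) then show ?thesis using PC
      by (cases c) auto
  qed
qed auto

lemma depth_rho: "depth (rhoT r t) = depth t"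
  by (induction t) auto


lemma BI_Aux_pos: "BI (Aux i) mt \<in> BI_set n m \<Longrightarrow> 0 < i"
  by (auto simp: BI_set_def)

lemma extr_over: "\<forall>u\<in>set X. instr_ok n m u \<Longrightarrow> thread_over n m (extr X)"
  by (induction X rule: extr.induct) (auto simp: act_def)

lemma over_aux: "thread_over n m t \<Longrightarrow> auxT t \<subseteq> {0<..}"
proof (induction t)
  case (PC x a y)
  then show ?case
    by (cases a) (rename_tac c, case_tac c, rename_tac f mt, case_tac f, auto dest: BI_Aux_pos)
qed auto

definition semx :: "nat \<Rightarrow> nat \<Rightarrow> nat \<Rightarrow> (nat \<Rightarrow> bool) \<Rightarrow> (nat \<Rightarrow> bool) \<Rightarrow> instr list \<Rightarrow> regfam \<times> nat" where
  "semx n m l b' b X = (apply_rf (use_rf (extr X) (in_regs n b ++ aux_regs l b')) (out_regs m),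
      depth (tuse_rf (tuse_rf (extr X) (in_regs n b ++ aux_regs l b')) (out_regs m)))"

definition SQ :: "nat \<Rightarrow> nat \<Rightarrow> instr list \<Rightarrow> instr list \<Rightarrow> bool" where
  "SQ n m X Y \<longleftrightarrow> (\<exists>L. \<forall>l\<ge>L. \<forall>b'. \<exists>b''. \<forall>b. semx n m l b' b X = semx n m l b'' b Y)"

lemma SQ_trans: assumes "SQ n m X Z" "SQ n m Z Y" shows "SQ n m X Y"
proof -
  obtain L1 where h1: "\<forall>l\<ge>L1. \<forall>b'. \<exists>b''. \<forall>b. semx n m l b' b X = semx n m l b'' b Z"
    using assms(1) unfolding SQ_def by blast
  obtain L2 where h2: "\<forall>l\<ge>L2. \<forall>b'. \<exists>b''. \<forall>b. semx n m l b' b Z = semx n m l b'' b Y"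
    using assms(2) unfolding SQ_def by blast
  have "\<forall>l\<ge>max L1 L2. \<forall>b'. \<exists>b''. \<forall>b. semx n m l b' b X = semx n m l b'' b Y"
  proof (intro allI impI)
    fix l b' assume l: "max L1 L2 \<le> l"
    have "\<exists>b3. \<forall>b. semx n m l b' b X = semx n m l b3 b Z" using h1 l by simp
    then obtain b3 where b3: "\<forall>b. semx n m l b' b X = semx n m l b3 b Z" by blast
    have "\<exists>b4. \<forall>b. semx n m l b3 b Z = semx n m l b4 b Y" using h2 l by simp
    then obtain b4 where b4: "\<forall>b. semx n m l b3 b Z = semx n m l b4 b Y" by blast
    show "\<exists>b''. \<forall>b. semx n m l b' b X = semx n m l b'' b Y" using b3 b4 by auto
  qed
  then show ?thesis unfolding SQ_def by blast
qed

lemma out_noaux: "\<forall>i. out_regs m (Aux i) = None" by (simp add: out_regs_def)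

lemma tuse_chi_noaux: "\<forall>i. G (Aux i) = None \<Longrightarrow> tuse_rf (chiT I t) G = chiT I (tuse_rf t G)"
  using tuse_chi[of I t G] flip_noaux[of G I] by simp

lemma SQ_simeq: "simeq (extr X) (extr Y) \<Longrightarrow> SQ n m X Y"
  unfolding SQ_def semx_def simeq_def by auto

lemma SQ_x: assumes "xeq n m X Y" shows "SQ n m X Y"
proof -
  obtain I where Y: "Y = map (chi I) X" using assms unfolding xeq_def by blast
  have "\<forall>b'. \<exists>b''. \<forall>b. semx n m l b' b X = semx n m l b'' b Y" for l
  proof
    fix b'
    define b'' where "b'' = (\<lambda>i. if i \<in> I then \<not> b' i else b' i)"
    have fl: "in_regs n b ++ aux_regs l b'' = flipF I (in_regs n b ++ aux_regs l b')" for b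
      by (rule ext) (auto simp: flipF_def in_regs_def aux_regs_def map_add_def b''_def split: focus.split option.split)
    show "\<exists>b''. \<forall>b. semx n m l b' b X = semx n m l b'' b Y"
      by (rule exI[of _ b''])
         (simp add: semx_def Y extr_chi fl use_chi tuse_chi apply_chi[OF out_noaux]
          tuse_chi_noaux[OF out_noaux] depth_chi)
  qed
  then show ?thesis unfolding SQ_def by blast
qed

lemma SQ_r: assumes "req n m X Y" shows "SQ n m X Y"
proof -
  obtain r where r: "bij_betw r {0<..} {0<..}" and Y: "Y = map (rho r) X"
    using assms unfolding req_def by blast
  have XI: "X \<in> IS n m" using assms unfolding req_def by blast
  define A where "A = auxT (extr X)"
  have Apos: "A \<subseteq> {0<..}" unfolding A_def using XI extr_over over_aux unfolding IS_def by blast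
  have fA: "finite A" unfolding A_def by (rule finite_auxT)
  have injr: "inj_on r {0<..}" using r bij_betw_imp_inj_on by blast
  have injA: "inj_on r A" using inj_on_subset[OF injr Apos] .
  have rpos: "\<And>i. i \<in> A \<Longrightarrow> 0 < r i" using r Apos unfolding bij_betw_def by auto
  define L where "L = Max (insert 0 (A \<union> r ` A))"
  have Lb: "\<And>i. i \<in> A \<Longrightarrow> i \<le> L \<and> r i \<le> L" unfolding L_def using fA by auto
  have "\<forall>b'. \<exists>b''. \<forall>b. semx n m l b' b X = semx n m l b'' b Y" if lL: "L \<le> l" for l
  proof
    fix b' :: "nat \<Rightarrow> bool"
    define b'' where "b'' = (\<lambda>j. b' (inv_into {0<..} r j))"
    show "\<exists>b''. \<forall>b. semx n m l b' b X = semx n m l b'' b Y"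
    proof (intro exI allI)
      fix b
      define F where "F = in_regs n b ++ aux_regs l b'"
      define G where "G = in_regs n b ++ aux_regs l b''"
      have c1: "\<forall>f. (\<forall>i. f \<noteq> Aux i) \<longrightarrow> G f = F f"
        unfolding F_def G_def by (auto simp: in_regs_def aux_regs_def map_add_def split: focus.split)
      have c2: "\<forall>i\<in>A. G (Aux (r i)) = F (Aux i)"
      proof
        fix i assume iA: "i \<in> A"
        have "0 < i" "i \<le> l" "0 < r i" "r i \<le> l" using iA Apos rpos Lb[OF iA] lL by auto
        moreover have "inv_into {0<..} r (r i) = i" using inv_into_f_f[OF injr] iA Apos by auto
        ultimately show "G (Aux (r i)) = F (Aux i)"
          unfolding F_def G_def b''_def by (simp add: in_regs_def aux_regs_def map_add_def)
      qed
      have s: "auxT (extr X) \<subseteq> A" unfolding A_def by simp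
      show "semx n m l b' b X = semx n m l b'' b Y"
        unfolding semx_def Y extr_rho F_def[symmetric] G_def[symmetric]
        using use_rho[OF c1 c2 injA s] tuse_rho[OF c1 c2 injA s]
        by (simp add: apply_rho[OF out_noaux] tuse_rho_noaux[OF out_noaux] depth_rho)
    qed
  qed
  then show ?thesis unfolding SQ_def by blast
qed

lemma SQ_b: "beq n m X Y \<Longrightarrow> SQ n m X Y"
  unfolding beq_def SQ_def semx_def by auto

lemma SQ_t: "teq n m X Y \<Longrightarrow> SQ n m X Y"
  unfolding teq_def using teq_simeq SQ_simeq by blast

lemma saeq_SQ: "saeq n m X Y \<Longrightarrow> SQ n m X Y"
  unfolding saeq_def
proof (induction rule: tranclp_induct)
  case (base y) then show ?case using SQ_b SQ_x SQ_r SQ_t by blast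
next
  case (step y z)
  have "SQ n m y z" using step.hyps(2) SQ_b SQ_x SQ_r SQ_t by blast
  then show ?case using step.IH SQ_trans by blast
qed

theorem theorem1:
  fixes n m :: nat and X Y :: "instr list"
  assumes "X \<in> IS n m" and "Y \<in> IS n m" and "saeq n m X Y"
  shows "\<exists>l. \<forall>b' :: nat \<Rightarrow> bool. \<exists>b'' :: nat \<Rightarrow> bool. \<forall>b :: nat \<Rightarrow> bool.
           apply_rf (use_rf (extr X) (in_regs n b ++ aux_regs l b')) (out_regs m)
             = apply_rf (use_rf (extr Y) (in_regs n b ++ aux_regs l b'')) (out_regs m)
         \<and> depth (tuse_rf (tuse_rf (extr X) (in_regs n b ++ aux_regs l b')) (out_regs m))
             = depth (tuse_rf (tuse_rf (extr Y) (in_regs n b ++ aux_regs l b'')) (out_regs m))"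
proof -
  obtain L where "\<forall>l\<ge>L. \<forall>b'. \<exists>b''. \<forall>b. semx n m l b' b X = semx n m l b'' b Y"
    using saeq_SQ[OF assms(3)] unfolding SQ_def by blast
  then have "\<forall>b'. \<exists>b''. \<forall>b. semx n m L b' b X = semx n m L b'' b Y" by blast
  then show ?thesis unfolding semx_def by auto
qed

end
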